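(* Let $\frac{A}{B}\in \mathcal{F}_n(k)$ and $u\in k^\times$. Then the Bézout form of $\frac{X}{u} \oplus^{\mathrm{N}} \frac{A}{B}$ is conjugate by an element of $\mathbf{SL}_{n+1}(k)$ to the block diagonal form $\langle u \rangle \oplus \mathrm{B\acute{e}z}_n(A,B)$.
   Context: Let $k$ be a field. $\mathcal{F}_n(k)$ is the set of pointed degree $n$ rational functions $\frac AB$: $A\in k[X]$ monic of degree $n$, $\deg B<n$, $\mathrm{res}_{n,n}(A,B)\neq0$, with unique Bézout relation $AU+BV=1$ ($\deg U\leq n-2$, $\deg V\leq n-1$). The law $\oplus^{\mathrm{N}}$: $\frac{A_1}{B_1}\oplus^{\mathrm{N}}\frac{A_2}{B_2}=\frac{A_3}{B_3}$ with $\begin{bmatrix}A_3 & -V_3\\ B_3 & U_3\end{bmatrix} = \begin{bmatrix}A_1 & -V_1\\ B_1 & U_1\end{bmatrix}\begin{bmatrix}A_2 & -V_2\\ B_2 & U_2\end{bmatrix}$; in particular $\frac{X}{u}\oplus^{\mathrm{N}}\frac AB=\frac{XA-B/u}{uA}$. The Bézout form $\mathrm{B\acute{e}z}_n(A,B)$ is the symmetric bilinear form on $k^n$ with Gram matrix $[c_{p,q}]_{1\le p,q\le n}$ where $\frac{A(X)B(Y)-A(Y)B(X)}{X-Y}=\sum c_{p,q}X^{p-1}Y^{q-1}$. $\langle u\rangle$ is the rank one form with Gram matrix $(u)$. *)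

theory Defs
  imports "Subresultants.Resultant_Prelim"
begin

definition res_nn :: "nat \<Rightarrow> 'a::comm_ring_1 poly \<Rightarrow> 'a poly \<Rightarrow> 'a" where
  "res_nn n A B = det (sylvester_mat_sub n n A B)"

text \<open>Pointed degree n rational functions A/B, represented by the pair (A,B).\<close>
definition pointed_rat_fun :: "nat \<Rightarrow> 'a::field poly \<Rightarrow> 'a poly \<Rightarrow> bool" where
  "pointed_rat_fun n A B \<longleftrightarrow>
     degree A = n \<and> lead_coeff A = 1 \<and> (B = 0 \<or> degree B < n) \<and> res_nn n A B \<noteq> 0"

text \<open>Bivariate polynomials as 'a poly poly: outer variable Y, inner variable X.
  The Bezoutian (A(X)B(Y) - A(Y)B(X)) / (X - Y).\<close>
definition bezoutian :: "'a::field poly \<Rightarrow> 'a poly \<Rightarrow> 'a poly poly" where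
  "bezoutian A B =
     ([:A:] * map_poly (\<lambda>c. [:c:]) B - map_poly (\<lambda>c. [:c:]) A * [:B:])
       div [:[:0, 1:], -1:]"

text \<open>Gram matrix of Bez_n(A,B): entry (i,j) (0-based) is the coefficient of X^i Y^j.\<close>
definition bez_mat :: "nat \<Rightarrow> 'a::field poly \<Rightarrow> 'a poly \<Rightarrow> 'a mat" where
  "bez_mat n A B = mat n n (\<lambda>(i, j). coeff (coeff (bezoutian A B) j) i)"

text \<open>The law X/u (+)^N A/B = (XA - B/u)/(uA), as the pair (numerator, denominator).\<close>
definition oplusN_lin :: "'a::field \<Rightarrow> 'a poly \<Rightarrow> 'a poly \<Rightarrow> 'a poly \<times> 'a poly" where
  "oplusN_lin u A B = ([:0, 1:] * A - smult (inverse u) B, smult u A)"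

end

theory Submission
  imports Defs
begin


abbreviation Cp :: "'a::field poly \<Rightarrow> 'a poly poly" where "Cp p \<equiv> map_poly (\<lambda>c. [:c:]) p"

definition NN :: "'a::field poly \<Rightarrow> 'a poly \<Rightarrow> 'a poly poly" where
  "NN A B = [:A:] * Cp B - Cp A * [:B:]"

lemma coeff_NN: "coeff (NN A B) k = smult (coeff B k) A - smult (coeff A k) B"
  unfolding NN_def by (simp add: coeff_map_poly mult.commute[of _ "[:B:]"])

lemma poly_Cp: "poly (Cp p) [:0,1:] = p"
  by (induction p) (simp_all add: map_poly_pCons)

lemma D_dvd_NN: "[:[:0, 1:], -1:] dvd NN A B"
proof -
  have "poly (NN A B) [:0,1:] = 0" unfolding NN_def by (simp add: poly_Cp)
  then have "[:- [:0,1:], 1:] dvd NN A B" using poly_eq_0_iff_dvd by blast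
  moreover have "[:[:0, 1:], -1:] = - [:- [:0,1:], 1:]" by simp
  ultimately show ?thesis by (metis minus_dvd_iff)
qed

lemma bez_NN: "bezoutian A B = NN A B div [:[:0, 1:], -1:]"
  unfolding bezoutian_def NN_def ..

lemma NN_eq: "NN A B = [:[:0, 1:], -1:] * bezoutian A B"
  using D_dvd_NN[of A B] unfolding bez_NN by (metis dvd_mult_div_cancel)

lemma coeff_D_mult: "coeff ([:[:0, 1:], -1:] * (Q::'a::field poly poly)) k =
   [:0,1:] * coeff Q k - (if k = 0 then 0 else coeff Q (k - 1))"
  proof (cases k)
  case (Suc m)
  have "coeff ([:[:0, 1:], -1:] * Q) k = [:0, 1:] * coeff Q k + coeff (smult (-1) Q) m"
    by (simp add: Suc)
  then show ?thesis using Suc by simp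
qed simp

lemma NN_plus:
  fixes A B :: "'a::field poly"
  assumes u: "u \<noteq> 0"
  shows "NN ([:0, 1:] * A - smult (inverse u) B) (smult u A)
     = [:[:0, 1:], -1:] * ([:smult u A:] * Cp A) + NN A B"
proof (rule poly_eqI)
  fix k
  show "coeff (NN ([:0, 1:] * A - smult (inverse u) B) (smult u A)) k =
        coeff ([:[:0, 1:], -1:] * ([:smult u A:] * Cp A) + NN A B) k"
  proof (cases k)
    case 0
    then show ?thesis using u by (simp add: coeff_NN coeff_D_mult coeff_map_poly algebra_simps smult_diff_right mult.assoc[symmetric])
  next
    case (Suc m)
    then show ?thesis using u by (simp add: coeff_NN coeff_D_mult coeff_map_poly algebra_simps smult_diff_right smult_diff_left mult.assoc[symmetric])
  qed
qed

lemma D_nz: "[:[:0, 1:], -1:] \<noteq> (0::'a::field poly poly)" by simp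

lemma bez_plus:
  fixes A B :: "'a::field poly"
  assumes u: "u \<noteq> 0"
  shows "bezoutian ([:0, 1:] * A - smult (inverse u) B) (smult u A)
     = [:smult u A:] * Cp A + bezoutian A B"
proof -
  let ?D = "[:[:0, 1:], -1:] :: 'a poly poly"
  have "bezoutian ([:0, 1:] * A - smult (inverse u) B) (smult u A)
      = (?D * ([:smult u A:] * Cp A + bezoutian A B)) div ?D"
  proof -
    have "NN ([:0, 1:] * A - smult (inverse u) B) (smult u A) = ?D * ([:smult u A:] * Cp A + bezoutian A B)"
      unfolding NN_plus[OF u] distrib_left NN_eq[of A B] ..
    then show ?thesis by (simp only: bez_NN)
  qed
  also have "\<dots> = [:smult u A:] * Cp A + bezoutian A B"
    by (rule nonzero_mult_div_cancel_left[OF D_nz])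
  finally show ?thesis .
qed

lemma bez_zero_Y:
  fixes A B :: "'a::field poly"
  assumes a: "\<forall>k>n. coeff A k = 0" and b: "\<forall>k\<ge>n. coeff B k = 0" and j: "n \<le> j"
  shows "coeff (bezoutian A B) j = 0"
proof (cases "bezoutian A B = 0")
  case False
  have "degree (NN A B) \<le> n"
    by (rule degree_le) (use a b in \<open>simp add: coeff_NN\<close>)
  moreover have "degree (NN A B) = 1 + degree (bezoutian A B)"
    unfolding NN_eq by (subst degree_mult_eq[OF D_nz False]) simp
  ultimately show ?thesis using j by (simp add: coeff_eq_0)
qed simp

lemma bez_zero_X:
  fixes A B :: "'a::field poly"
  assumes a: "\<forall>k>n. coeff A k = 0" and b: "\<forall>k\<ge>n. coeff B k = 0"
  shows "n \<le> i \<Longrightarrow> coeff (coeff (bezoutian A B) k) i = 0"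
proof (induction k arbitrary: i)
  case 0
  have "coeff (coeff (NN A B) 0) (Suc i) = coeff (coeff (bezoutian A B) 0) i"
    by (subst NN_eq) (simp add: coeff_D_mult)
  moreover have "coeff (coeff (NN A B) 0) (Suc i) = 0"
    using a b 0 by (simp add: coeff_NN)
  ultimately show ?case by simp
next
  case (Suc k)
  have "coeff (coeff (NN A B) (Suc k)) (Suc i) = coeff (coeff (bezoutian A B) (Suc k)) i
         - coeff (coeff (bezoutian A B) k) (Suc i)"
    by (subst NN_eq) (simp add: coeff_D_mult)
  moreover have "coeff (coeff (NN A B) (Suc k)) (Suc i) = 0"
    using a b Suc.prems by (simp add: coeff_NN)
  moreover have "coeff (coeff (bezoutian A B) k) (Suc i) = 0"
    using Suc.IH Suc.prems by simp
  ultimately show ?case by simp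
qed



lemma triple:
  fixes P G :: "'a::comm_ring_1 mat"
  assumes "P \<in> carrier_mat m m" "G \<in> carrier_mat m m" "i < m" "j < m"
  shows "(transpose_mat P * G * P) $$ (i,j) = (\<Sum>k<m. P$$(k,i) * (\<Sum>l<m. P$$(l,j) * G$$(k,l)))"
proof -
  have "(transpose_mat P * G * P) $$ (i,j) = (\<Sum>k<m. P$$(k,i) * (\<Sum>l<m. G$$(k,l) * P$$(l,j)))"
    using assms by (simp add: scalar_prod_def atLeast0LessThan)
  then show ?thesis by (simp add: mult.commute)
qed

definition Pm :: "nat \<Rightarrow> 'a::field poly \<Rightarrow> 'a mat" where
  "Pm n A = mat (n+1) (n+1) (\<lambda>(i,j). if j = 0 then (if i = n then (-1)^n else 0)
      else (if i = j - 1 then 1 else 0) - (if i = n then coeff A (j-1) else 0))"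

lemma Pm_carrier: "Pm n A \<in> carrier_mat (n+1) (n+1)" unfolding Pm_def by simp

lemma col0: "(\<Sum>k<n+1. Pm n A $$ (k,0) * F k) = (-1)^n * F n"
proof -
  have "(\<Sum>k<n+1. Pm n A $$ (k,0) * F k) = (\<Sum>k<n+1. if k = n then (-1)^n * F k else 0)"
    by (rule sum.cong) (auto simp: Pm_def)
  then show ?thesis by simp
qed

lemma colS: assumes "j < n" shows "(\<Sum>k<n+1. Pm n A $$ (k,Suc j) * F k) = F j - coeff A j * F n"
proof -
  have "(\<Sum>k<n+1. Pm n A $$ (k,Suc j) * F k) =
     (\<Sum>k<n+1. (if k = j then F k else 0) - (if k = n then coeff A j * F k else 0))"
    using assms by (intro sum.cong) (auto simp: Pm_def)
  also have "\<dots> = F j - coeff A j * F n" using assms by (simp add: sum_subtractf)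
  finally show ?thesis .
qed

lemma det_Pm: "det (Pm n A) = 1"
proof -
  have "det (Pm n A) = (\<Sum>i<n+1. Pm n A $$ (i,0) * cofactor (Pm n A) i 0)"
    by (rule laplace_expansion_column[OF Pm_carrier]) simp
  also have "\<dots> = (-1)^n * cofactor (Pm n A) n 0" by (rule col0)
  also have "mat_delete (Pm n A) n 0 = 1\<^sub>m n"
    by (rule eq_matI) (auto simp: mat_delete_def Pm_def)
  then have "cofactor (Pm n A) n 0 = (-1)^n" by (simp add: cofactor_def)
  finally show ?thesis by (simp flip: power_add add: power_even_eq)
qed

theorem lemma3p15:
  fixes A B :: "'a::field poly" and u :: 'a and n :: nat
  assumes "pointed_rat_fun n A B" and "u \<noteq> 0"
  shows "\<exists>P \<in> carrier_mat (n+1) (n+1). det P = 1 \<and>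
           transpose_mat P * bez_mat (n+1) (fst (oplusN_lin u A B)) (snd (oplusN_lin u A B)) * P
           = four_block_mat (mat 1 1 (\<lambda>_. u)) (0\<^sub>m 1 n) (0\<^sub>m n 1) (bez_mat n A B)"
proof -
  have degA: "degree A = n" and an: "coeff A n = 1" and degB: "B = 0 \<or> degree B < n"
    using assms(1) unfolding pointed_rat_fun_def by auto
  have a0: "\<forall>k>n. coeff A k = 0" using degA by (simp add: coeff_eq_0)
  have b0: "\<forall>k\<ge>n. coeff B k = 0" using degB by (auto simp: coeff_eq_0)
  define a where "a = coeff A"
  define c where "c = (\<lambda>k l. coeff (coeff (bezoutian A B) l) k)"
  have cX: "c n l = 0" for l unfolding c_def by (rule bez_zero_X[OF a0 b0]) simp
  have cY: "c k n = 0" for k unfolding c_def using bez_zero_Y[OF a0 b0, of n] by simp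
  define G where "G = bez_mat (n+1) (fst (oplusN_lin u A B)) (snd (oplusN_lin u A B))"
  have G_carrier: "G \<in> carrier_mat (n+1) (n+1)" unfolding G_def bez_mat_def by simp
  have Gij: "G $$ (k,l) = u * a k * a l + c k l" if "k < n+1" "l < n+1" for k l
    using that unfolding G_def bez_mat_def oplusN_lin_def fst_conv snd_conv bez_plus[OF assms(2)]
    by (simp add: c_def a_def coeff_map_poly mult_ac)
  define P where "P = Pm n A"
  have P: "P \<in> carrier_mat (n+1) (n+1)" unfolding P_def by (rule Pm_carrier)
  have s2: "((-1::'a)^n) * (-1)^n = 1" by (simp flip: power_add add: power_even_eq)
  have "transpose_mat P * G * P
           = four_block_mat (mat 1 1 (\<lambda>_. u)) (0\<^sub>m 1 n) (0\<^sub>m n 1) (bez_mat n A B)"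
  proof (rule eq_matI)
    fix i j assume i: "i < dim_row (four_block_mat (mat 1 1 (\<lambda>_. u)) (0\<^sub>m 1 n) (0\<^sub>m n 1) (bez_mat n A B))"
      and j: "j < dim_col (four_block_mat (mat 1 1 (\<lambda>_. u)) (0\<^sub>m 1 n) (0\<^sub>m n 1) (bez_mat n A B))"
    then have i': "i < n+1" and j': "j < n+1" by (simp_all add: bez_mat_def)
    have T: "(transpose_mat P * G * P) $$ (i,j) = (\<Sum>k<n+1. P$$(k,i) * (\<Sum>l<n+1. P$$(l,j) * G$$(k,l)))"
      by (rule triple[OF P G_carrier i' j'])
    show "(transpose_mat P * G * P) $$ (i,j) =
      four_block_mat (mat 1 1 (\<lambda>_. u)) (0\<^sub>m 1 n) (0\<^sub>m n 1) (bez_mat n A B) $$ (i,j)"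
    proof (cases i)
      case 0
      note i0 = this
      show ?thesis
      proof (cases j)
        case 0
        have "(transpose_mat P * G * P) $$ (i,j) = (-1)^n * ((-1)^n * G$$(n,n))"
          using T by (simp only: i0 0 P_def col0)
        also have "\<dots> = u" using s2 by (simp add: Gij an a_def cX mult.assoc[symmetric])
        finally show ?thesis using i0 0 by (simp add: bez_mat_def)
      next
        case (Suc j0)
        have j0: "j0 < n" using j' Suc by simp
        have "(transpose_mat P * G * P) $$ (i,j) = (-1)^n * (G$$(n,j0) - a j0 * G$$(n,n))"
          using T by (simp only: i0 Suc P_def col0 colS[OF j0] a_def)
        also have "\<dots> = 0" using j0 by (simp add: Gij an a_def cX cY algebra_simps)
        finally show ?thesis using i0 Suc j0 by (simp add: bez_mat_def)
      qed
    next
      case (Suc i0)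
      note si = this
      have i0: "i0 < n" using i' Suc by simp
      show ?thesis
      proof (cases j)
        case 0
        have "(transpose_mat P * G * P) $$ (i,j) = (-1)^n * G$$(i0,n) - a i0 * ((-1)^n * G$$(n,n))"
          using T by (simp only: Suc 0 P_def col0 colS[OF i0] a_def)
        also have "\<dots> = 0" using i0 by (simp add: Gij an a_def cX cY algebra_simps)
        finally show ?thesis using Suc 0 i0 by (simp add: bez_mat_def)
      next
        case (Suc j0)
        note sj = this
        have j0: "j0 < n" using j' Suc by simp
        have "(transpose_mat P * G * P) $$ (i,j) = (G$$(i0,j0) - a j0 * G$$(i0,n))
               - a i0 * (G$$(n,j0) - a j0 * G$$(n,n))"
          using T by (simp only: si sj P_def colS[OF j0] colS[OF i0] a_def)
        also have "\<dots> = c i0 j0" using i0 j0 by (simp add: Gij an a_def cX cY algebra_simps)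
        finally show ?thesis using si sj i0 j0 by (simp add: bez_mat_def c_def)
      qed
    qed
  qed (use P in \<open>simp_all add: bez_mat_def\<close>)
  then show ?thesis using P det_Pm unfolding P_def G_def by blast
qed

end
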